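(* Let $f:\mathbb{R}^n\to\mathbb{R}$ be differentiable, $L$-smooth and $m$-strongly convex with $m>0$, and let $x_*$ be the unique point with $\nabla f(x_* )=0$. Let $0<\mu<2$, $\delta>0$, $\alpha>0$, $\eta>0$ and constants $0<c_1\le c_2<+\infty$. Consider the adaptive fractional order accelerated gradient descent (AFOAGD) iteration $$x_{k+1}=y_k-\alpha\,\nabla f(y_k)\,\beta_k\,(\|y_k-y_{k-1}\|_2+\delta)^{1-\mu},\qquad y_k=x_k+\eta(x_k-x_{k-1}),$$ where the scalars $\beta_k>0$ satisfy $0<c_1\le \beta_k(\|y_k-y_{k-1}\|_2+\delta)^{1-\mu}\le c_2<+\infty$ for all $k$. Set $u_k=\nabla f(y_k)\,\beta_k(\|y_k-y_{k-1}\|_2+\delta)^{1-\mu}$, $u_*=0$, and $$e_k=\big[(x_{k-1}-x_* )^\top,\ (x_k-x_* )^\top,\ (u_k-u_* )^\top\big]^\top\in\mathbb{R}^{3n}.$$ Then for all trajectories and all $k$, $$f(x_{k+1})-f(x_* )\le e_k^\top N^1 e_k,$$ where $$N^1=\begin{bmatrix}-\frac{\eta^2 m}{2}I_n & \frac{\eta(\eta+1)m}{2}I_n & -\frac{\eta}{2c_1}I_n\\ \frac{\eta(\eta+1)m}{2}I_n & -\frac{(\eta+1)^2 m}{2}I_n & \frac{\eta+1}{2c_1}I_n\\ -\frac{\eta}{2c_1}I_n & \frac{\eta+1}{2c_1}I_n & \left(\frac12\alpha^2L-\frac{\alpha}{c_2}\right)I_n\end{bmatrix}.$$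
   Context: A differentiable $f$ is $L$-smooth if $\|\nabla f(x)-\nabla f(y)\|_2\le L\|x-y\|_2$ for all $x,y$, and $m$-strongly convex if $m\|x-y\|_2^2\le (x-y)^\top(\nabla f(x)-\nabla f(y))$ for all $x,y$. $I_n$ is the $n\times n$ identity matrix. *)

theory Defs
  imports "HOL-Analysis.Analysis"
begin

definition L_smooth :: "real \<Rightarrow> ('a::real_inner \<Rightarrow> 'a) \<Rightarrow> bool" where
  "L_smooth L g \<longleftrightarrow> (\<forall>x y. norm (g x - g y) \<le> L * norm (x - y))"

definition strongly_convex_grad :: "real \<Rightarrow> ('a::real_inner \<Rightarrow> 'a) \<Rightarrow> bool" where
  "strongly_convex_grad m g \<longleftrightarrow> (\<forall>x y. m * (norm (x - y))\<^sup>2 \<le> inner (x - y) (g x - g y))"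

text \<open>Quadratic form e^T (N \<otimes> I_n) e of a 3x3 block matrix whose blocks are scalar
  multiples N i j of the identity I_n, evaluated at the stacked vector
  e = [e 0; e 1; e 2] in R^(3n).\<close>

definition block_quad3 :: "(nat \<Rightarrow> nat \<Rightarrow> real) \<Rightarrow> (nat \<Rightarrow> 'a::real_inner) \<Rightarrow> real" where
  "block_quad3 N e = (\<Sum>i<3. \<Sum>j<3. N i j * inner (e i) (e j))"

definition N1 :: "real \<Rightarrow> real \<Rightarrow> real \<Rightarrow> real \<Rightarrow> real \<Rightarrow> real \<Rightarrow> nat \<Rightarrow> nat \<Rightarrow> real" where
  "N1 \<eta> m L \<alpha> c1 c2 i j =
     [[- (\<eta>^2 * m / 2),        \<eta> * (\<eta> + 1) * m / 2,     - (\<eta> / (2 * c1))],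
      [\<eta> * (\<eta> + 1) * m / 2,    - ((\<eta> + 1)^2 * m / 2), (\<eta> + 1) / (2 * c1)],
      [- (\<eta> / (2 * c1)),       (\<eta> + 1) / (2 * c1),     \<alpha>^2 * L / 2 - \<alpha> / c2]] ! i ! j"

end

theory Submission
  imports Defs
begin

lemma line_deriv:
  fixes f :: "'a::real_inner \<Rightarrow> real"
  assumes "\<And>z. GDERIV f z :> g z"
  shows "((\<lambda>t. f (y + t *\<^sub>R d)) has_real_derivative inner (g (y + t *\<^sub>R d)) d) (at t)"
proof -
  have l: "((\<lambda>t. y + t *\<^sub>R d) has_derivative (\<lambda>h. h *\<^sub>R d)) (at t)"
    by (auto intro!: derivative_eq_intros)
  have "((\<lambda>t. f (y + t *\<^sub>R d)) has_derivative (\<lambda>h. inner (h *\<^sub>R d) (g (y + t *\<^sub>R d)))) (at t)"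
    using diff_chain_at[OF l assms[of "y + t *\<^sub>R d", unfolded gderiv_def]] by (simp add: o_def)
  moreover have "(\<lambda>h. inner (h *\<^sub>R d) (g (y + t *\<^sub>R d))) = (*) (inner (g (y + t *\<^sub>R d)) d)"
    by (auto simp: fun_eq_iff inner_commute)
  ultimately show ?thesis unfolding has_field_derivative_def by simp
qed

lemma descent:
  fixes f :: "'a::real_inner \<Rightarrow> real"
  assumes gr: "\<And>z. GDERIV f z :> g z" and sm: "L_smooth L g"
  shows "f (y + d) \<le> f y + inner (g y) d + L/2 * (norm d)^2"
proof -
  define \<phi> where "\<phi> t = f (y + t *\<^sub>R d) - t * inner (g y) d - L/2 * t^2 * (norm d)^2" for t
  have "\<phi> 1 \<le> \<phi> 0"
  proof (rule DERIV_nonpos_imp_nonincreasing[of 0 1])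
    fix t :: real assume t: "0 \<le> t" "t \<le> 1"
    have D: "(\<phi> has_real_derivative inner (g (y + t *\<^sub>R d)) d - inner (g y) d - L * t * (norm d)^2) (at t)"
      unfolding \<phi>_def
      by (rule derivative_eq_intros line_deriv[OF gr] | simp)+
    have "inner (g (y + t *\<^sub>R d)) d - inner (g y) d = inner (g (y + t *\<^sub>R d) - g y) d"
      by (simp add: inner_diff_left)
    also have "\<dots> \<le> norm (g (y + t *\<^sub>R d) - g y) * norm d" by (rule norm_cauchy_schwarz)
    also have "\<dots> \<le> (L * norm (t *\<^sub>R d)) * norm d"
      using sm unfolding L_smooth_def by (intro mult_right_mono) (metis add_diff_cancel_left', simp)
    also have "\<dots> = L * t * (norm d)^2" using t by (simp add: power2_eq_square)
    finally show "\<exists>y. (\<phi> has_real_derivative y) (at t) \<and> y \<le> 0" using D by force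
  qed simp
  then show ?thesis unfolding \<phi>_def by simp
qed

lemma sc_lower:
  fixes f :: "'a::real_inner \<Rightarrow> real"
  assumes gr: "\<And>z. GDERIV f z :> g z" and sc: "strongly_convex_grad m g"
  shows "f (y + d) \<ge> f y + inner (g y) d + m/2 * (norm d)^2"
proof -
  define \<phi> where "\<phi> t = f (y + t *\<^sub>R d) - t * inner (g y) d - m/2 * t^2 * (norm d)^2" for t
  have "\<phi> 0 \<le> \<phi> 1"
  proof (rule DERIV_nonneg_imp_nondecreasing[of 0 1])
    fix t :: real assume t: "0 \<le> t" "t \<le> 1"
    have D: "(\<phi> has_real_derivative inner (g (y + t *\<^sub>R d)) d - inner (g y) d - m * t * (norm d)^2) (at t)"
      unfolding \<phi>_def
      by (rule derivative_eq_intros line_deriv[OF gr] | simp)+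
    have "m * (norm (t *\<^sub>R d))^2 \<le> inner (t *\<^sub>R d) (g (y + t *\<^sub>R d) - g y)"
      using sc unfolding strongly_convex_grad_def by (metis add_diff_cancel_left')
    hence "t * (m * t * (norm d)^2) \<le> t * inner (g (y + t *\<^sub>R d) - g y) d"
      by (simp add: power2_eq_square inner_commute mult_ac)
    hence "t * (inner (g (y + t *\<^sub>R d)) d - inner (g y) d - m * t * (norm d)^2) \<ge> 0"
      by (simp add: inner_diff_left algebra_simps)
    moreover have "t = 0 \<Longrightarrow> inner (g (y + t *\<^sub>R d)) d - inner (g y) d - m * t * (norm d)^2 = 0" by simp
    ultimately have "inner (g (y + t *\<^sub>R d)) d - inner (g y) d - m * t * (norm d)^2 \<ge> 0"
      using t by (cases "t = 0") (auto simp: zero_le_mult_iff)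
    then show "\<exists>y. (\<phi> has_real_derivative y) (at t) \<and> y \<ge> 0" using D by force
  qed simp
  then show ?thesis unfolding \<phi>_def by simp
qed
theorem lemma1:
  fixes f :: "real^'n \<Rightarrow> real" and g :: "real^'n \<Rightarrow> real^'n"
    and L m \<mu> \<delta> \<alpha> \<eta> c1 c2 :: real and xs :: "real^'n"
    and x y :: "nat \<Rightarrow> real^'n" and \<beta> :: "nat \<Rightarrow> real"
  assumes grad: "\<And>z. GDERIV f z :> g z"
    and smooth: "L_smooth L g"
    and sconv: "strongly_convex_grad m g"
    and m_pos: "m > 0"
    and opt: "g xs = 0"
    and mu: "0 < \<mu>" "\<mu> < 2"
    and pars: "\<delta> > 0" "\<alpha> > 0" "\<eta> > 0"
    and cs: "0 < c1" "c1 \<le> c2"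
    and y_def: "\<And>k. k \<ge> 1 \<Longrightarrow> y k = x k + \<eta> *\<^sub>R (x k - x (k - 1))"
    and step: "\<And>k. k \<ge> 1 \<Longrightarrow>
       x (k + 1) = y k - (\<alpha> * \<beta> k * (norm (y k - y (k - 1)) + \<delta>) powr (1 - \<mu>)) *\<^sub>R g (y k)"
    and beta_pos: "\<And>k. k \<ge> 1 \<Longrightarrow> \<beta> k > 0"
    and beta_bnd: "\<And>k. k \<ge> 1 \<Longrightarrow>
       c1 \<le> \<beta> k * (norm (y k - y (k - 1)) + \<delta>) powr (1 - \<mu>) \<and>
       \<beta> k * (norm (y k - y (k - 1)) + \<delta>) powr (1 - \<mu>) \<le> c2"
  shows "\<forall>k\<ge>1. f (x (k + 1)) - f xs \<le>
     block_quad3 (N1 \<eta> m L \<alpha> c1 c2)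
       (\<lambda>i. [x (k - 1) - xs, x k - xs,
              (\<beta> k * (norm (y k - y (k - 1)) + \<delta>) powr (1 - \<mu>)) *\<^sub>R g (y k) - 0] ! i)"
  proof (intro allI impI)
  fix k :: nat assume k: "k \<ge> 1"
  define s where "s = \<beta> k * (norm (y k - y (k - 1)) + \<delta>) powr (1 - \<mu>)"
  define G where "G = g (y k)"
  define a where "a = x (k - 1) - xs"
  define b where "b = x k - xs"
  define w where "w = y k - xs"
  have s1: "c1 \<le> s" and s2: "s \<le> c2" using beta_bnd[OF k] unfolding s_def by auto
  have spos: "s > 0" using s1 cs by linarith
  have w_eq: "w = (1 + \<eta>) *\<^sub>R b - \<eta> *\<^sub>R a"
    unfolding w_def a_def b_def y_def[OF k] by (simp add: algebra_simps)
  have xk1: "x (k + 1) = y k + (- (\<alpha> * s)) *\<^sub>R G"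
    unfolding step[OF k] s_def G_def by (simp add: mult.assoc)
  have d1: "f (x (k + 1)) \<le> f (y k) - \<alpha> * s * inner G G + L / 2 * (\<alpha> * s)^2 * inner G G"
  proof -
    have nG: "(norm ((- (\<alpha> * s)) *\<^sub>R G))^2 = (\<alpha> * s)^2 * inner G G"
      by (simp add: power_mult_distrib power2_norm_eq_inner[symmetric])
    show ?thesis
      using descent[OF grad smooth, of "y k" "(- (\<alpha> * s)) *\<^sub>R G"] unfolding xk1 nG
      by (simp add: G_def)
  qed
  have d2: "f xs \<ge> f (y k) - inner G w + m / 2 * inner w w"
    using sc_lower[OF grad sconv, of "y k" "xs - y k"] unfolding G_def w_def
    by (simp add: power2_norm_eq_inner inner_diff_right inner_commute algebra_simps)
  have mono: "m * inner w w \<le> inner w G"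
    using sconv opt unfolding strongly_convex_grad_def G_def w_def
    by (metis diff_zero power2_norm_eq_inner)
  have ww: "inner w w \<ge> 0" by simp
  have Gw: "inner G w \<ge> 0" 
  proof -
    have "0 \<le> m * inner w w" using ww m_pos by simp
    thus ?thesis using mono by (simp add: inner_commute)
  qed
  have c1b: "inner G w \<le> s / c1 * inner G w"
  proof -
    have "1 \<le> s / c1" using s1 cs by simp
    from mult_right_mono[OF this Gw] show ?thesis by simp
  qed
  have GG: "inner G G \<ge> 0" by simp
  have c2b: "\<alpha> * s^2 / c2 * inner G G \<le> \<alpha> * s * inner G G"
  proof -
    have "s / c2 \<le> 1" using s2 cs by simp
    hence "\<alpha> * s * (s / c2) * inner G G \<le> \<alpha> * s * 1 * inner G G"
      using spos pars GG by (intro mult_right_mono mult_left_mono) auto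
    thus ?thesis by (simp add: power2_eq_square)
  qed
  have rhs: "block_quad3 (N1 \<eta> m L \<alpha> c1 c2)
       (\<lambda>i. [x (k - 1) - xs, x k - xs, s *\<^sub>R g (y k) - 0] ! i)
     = - m / 2 * inner w w + s / c1 * inner G w + (\<alpha>^2 * L / 2 - \<alpha> / c2) * s^2 * inner G G"
    using cs unfolding block_quad3_def N1_def w_eq G_def[symmetric] a_def[symmetric] b_def[symmetric]
    by (simp add: numeral_3_eq_3 lessThan_Suc inner_add_left inner_add_right inner_diff_left
        inner_diff_right inner_commute[of b a] inner_commute[of G a] inner_commute[of G b]
        power2_eq_square field_simps)
  show "f (x (k + 1)) - f xs \<le> block_quad3 (N1 \<eta> m L \<alpha> c1 c2)
       (\<lambda>i. [x (k - 1) - xs, x k - xs,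
              (\<beta> k * (norm (y k - y (k - 1)) + \<delta>) powr (1 - \<mu>)) *\<^sub>R g (y k) - 0] ! i)"
    unfolding s_def[symmetric] rhs
    using d1 d2 c1b c2b by (simp add: power_mult_distrib algebra_simps)
qed

end
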